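(* Let $n\ge2$ and suppose $\Omega\subset\mathbb R^n$ is a globally $n$-regular domain. Let $\alpha\in(-n,0)$ and $\phi:[0,\infty)\to[0,\infty)$ be a Young function satisfying $\underline\Lambda_\phi(\alpha)<\infty$ and $\overline\Lambda_\phi(\alpha)<\infty$. Then there exist constants $C_1,C_2>0$ depending on $n,\alpha,\phi,\Omega$ such that $$\int_{\Omega\setminus E}\frac{\phi(t|x-y|^{-\alpha})}{|x-y|^{2n}}\,dy\ge C_1\frac1{|E|}\frac{|\Omega\setminus E|}{|\Omega|}\phi\big(C_2t|E|^{|\alpha|/n}\big)$$ whenever $t>0$, $x\in\Omega$ and $E\subset\Omega$ is measurable with $0<|E|<\infty$. Here, if $|\Omega|=\infty$, the ratio $\frac{|\Omega\setminus E|}{|\Omega|}$ is interpreted as $1$.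
   Context: A Young function is $\phi\in C([0,\infty))$, convex, with $\phi(0)=0$, $\phi(t)>0$ for $t>0$, $\lim_{t\to\infty}\phi(t)=\infty$. $\underline\Lambda_\phi(\alpha):=\sup_{x>0}\int_0^1\frac{\phi(t^{1-\alpha}x)}{\phi(x)}\frac{dt}{t^{n+1}}$, $\overline\Lambda_\phi(\alpha):=\sup_{x>0}\int_1^\infty\frac{\phi(t^{-\alpha}x)}{\phi(x)}\frac{dt}{t^{n+1}}$. A domain $\Omega$ is globally $n$-regular if there is $\theta\in(0,1)$ with $|B(x,r)\cap\Omega|\ge\theta r^n$ for all $x\in\Omega$ and all $0<r<2\operatorname{diam}\Omega$. *)

theory Defs
  imports "HOL-Analysis.Analysis"
begin

definition young_function :: "(real \<Rightarrow> real) \<Rightarrow> bool" where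
  "young_function \<phi> \<longleftrightarrow>
     continuous_on {0..} \<phi> \<and> convex_on {0..} \<phi> \<and> \<phi> 0 = 0 \<and>
     (\<forall>t>0. \<phi> t > 0) \<and> filterlim \<phi> at_top at_top"

definition Lambda_lower :: "nat \<Rightarrow> (real \<Rightarrow> real) \<Rightarrow> real \<Rightarrow> ennreal" where
  "Lambda_lower n \<phi> \<alpha> =
     (SUP x\<in>{0<..}. \<integral>\<^sup>+ t\<in>{0<..<1}.
        ennreal (\<phi> (t powr (1 - \<alpha>) * x) / \<phi> x / t ^ (n + 1)) \<partial>lborel)"

definition Lambda_upper :: "nat \<Rightarrow> (real \<Rightarrow> real) \<Rightarrow> real \<Rightarrow> ennreal" where
  "Lambda_upper n \<phi> \<alpha> =
     (SUP x\<in>{0<..}. \<integral>\<^sup>+ t\<in>{1<..}.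
        ennreal (\<phi> (t powr (- \<alpha>) * x) / \<phi> x / t ^ (n + 1)) \<partial>lborel)"

text \<open>Globally n-regular: for unbounded \<Omega> (diam = \<infinity>) the radius bound is vacuous.\<close>
definition globally_regular :: "'a::euclidean_space set \<Rightarrow> bool" where
  "globally_regular \<Omega> \<longleftrightarrow>
     (\<exists>\<theta>. 0 < \<theta> \<and> \<theta> < 1 \<and>
        (\<forall>x\<in>\<Omega>. \<forall>r. 0 < r \<and> (bounded \<Omega> \<longrightarrow> r < 2 * diameter \<Omega>) \<longrightarrow>
            emeasure lebesgue (ball x r \<inter> \<Omega>) \<ge> ennreal (\<theta> * r ^ DIM('a))))"

definition is_domain :: "'a::topological_space set \<Rightarrow> bool" where
  "is_domain \<Omega> \<longleftrightarrow> open \<Omega> \<and> connected \<Omega> \<and> \<Omega> \<noteq> {}"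

end

theory Submission
  imports Defs
begin

lemma yf_mono:
  assumes "young_function \<phi>" "0 \<le> u" "u \<le> v"
  shows "\<phi> u \<le> \<phi> v"
proof (cases "v = 0")
  case True then show ?thesis using assms by simp
next
  case False
  then have v: "v > 0" using assms by simp
  have cv: "convex_on {0..} \<phi>" and p0: "\<phi> 0 = 0" and pv: "\<phi> v > 0"
    using assms v unfolding young_function_def by auto
  have "\<phi> u = \<phi> ((1 - u/v) *\<^sub>R 0 + (u/v) *\<^sub>R v)" using v by simp
  also have "\<dots> \<le> (1 - u/v) * \<phi> 0 + (u/v) * \<phi> v"
    by (rule convex_onD[OF cv]) (use assms v in auto)
  also have "\<dots> = (u/v) * \<phi> v" using p0 by simp
  also have "\<dots> \<le> \<phi> v" using pv assms v by (intro mult_left_le_one_le) auto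
  finally show ?thesis .
qed

lemma yf_nonneg:
  assumes "young_function \<phi>" "0 \<le> u"
  shows "\<phi> u \<ge> 0"
  using yf_mono[OF assms(1) order_refl assms(2)] assms(1) unfolding young_function_def by simp

lemma doubling:
  assumes yf: "young_function \<phi>" and al: "\<alpha> < 0" and L: "Lambda_upper n \<phi> \<alpha> < \<infinity>"
  shows "\<exists>K>0. \<forall>T\<ge>1. \<forall>z>0. \<phi> (T powr (-\<alpha>) * z) \<le> K * T ^ n * \<phi> z"
proof -
  define L where "L = enn2real (Lambda_upper n \<phi> \<alpha>)"
  have LL: "Lambda_upper n \<phi> \<alpha> = ennreal L" using L unfolding L_def
    by (simp add: ennreal_enn2real_if less_top)
  have L0: "L \<ge> 0" unfolding L_def by simp
  define K where "K = L * 2 ^ (n+1) + 1"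
  have "K > 0" using L0 unfolding K_def by (simp add: add_nonneg_pos)
  moreover have "\<phi> (T powr (-\<alpha>) * z) \<le> K * T ^ n * \<phi> z" if T: "T \<ge> 1" and z: "z > 0" for T z
  proof -
    have pz: "\<phi> z > 0" using yf z unfolding young_function_def by auto
    define c where "c = \<phi> (T powr (-\<alpha>) * z) / \<phi> z / (2*T) ^ (n+1)"
    have c0: "c \<ge> 0" unfolding c_def using yf_nonneg[OF yf, of "T powr (-\<alpha>) * z"] z pz T by simp
    have "(\<integral>\<^sup>+ t. ennreal c * indicator {T<..<2*T} t \<partial>lborel)
        \<le> (\<integral>\<^sup>+ t\<in>{1<..}. ennreal (\<phi> (t powr (- \<alpha>) * z) / \<phi> z / t ^ (n + 1)) \<partial>lborel)"
    proof (intro nn_integral_mono)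
      fix t :: real
      show "ennreal c * indicator {T<..<2*T} t \<le> ennreal (\<phi> (t powr (- \<alpha>) * z) / \<phi> z / t ^ (n + 1)) * indicator {1<..} t"
      proof (cases "t \<in> {T<..<2*T}")
        case True
        then have t1: "t > 1" "t > T" "t < 2*T" using T by auto
        have "\<phi> (T powr (-\<alpha>) * z) \<le> \<phi> (t powr (-\<alpha>) * z)"
          using t1 T z al by (intro yf_mono[OF yf] mult_right_mono powr_mono2) auto
        moreover have "t ^ (n+1) \<le> (2*T) ^ (n+1)" using t1 by (intro power_mono) auto
        ultimately have "c \<le> \<phi> (t powr (-\<alpha>) * z) / \<phi> z / t ^ (n+1)"
          unfolding c_def using pz t1 T yf_nonneg[OF yf, of "T powr (-\<alpha>) * z"] z
          by (intro divide_mono divide_right_mono) auto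
        then show ?thesis using True t1 by (simp add: ennreal_leI)
      qed simp
    qed
    also have "\<dots> \<le> Lambda_upper n \<phi> \<alpha>"
      unfolding Lambda_upper_def using z by (intro SUP_upper) auto
    finally have "ennreal c * ennreal T \<le> ennreal L"
      using T LL by (simp add: nn_integral_cmult_indicator)
    then have "ennreal (c * T) \<le> ennreal L" using c0 T by (simp add: ennreal_mult)
    then have "c * T \<le> L" using L0 by (simp add: ennreal_le_iff)
    have A: "\<phi> (T powr (-\<alpha>) * z) = c * \<phi> z * (2*T)^(n+1)"
      unfolding c_def using pz T by simp
    have B: "(2*T)^(n+1) = T * (2^(n+1) * T^n)" by (simp add: power_mult_distrib)
    have "\<phi> (T powr (-\<alpha>) * z) = (c * T) * (\<phi> z * 2^(n+1) * T^n)"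
      unfolding A B by (simp add: algebra_simps)
    also have "\<dots> \<le> L * (\<phi> z * 2^(n+1) * T^n)"
      using pz T by (intro mult_right_mono \<open>c * T \<le> L\<close>) auto
    also have "\<dots> \<le> K * T ^ n * \<phi> z" unfolding K_def using pz T L0
      by (simp add: algebra_simps)
    finally show ?thesis .
  qed
  ultimately show ?thesis by blast
qed


lemma kernel_bound:
  assumes yf: "young_function \<phi>" and al: "\<alpha> < 0" and K: "K > 0"
    and D: "\<forall>T\<ge>1. \<forall>z>0. \<phi> (T powr (-\<alpha>) * z) \<le> K * T ^ n * \<phi> z"
    and t: "t > 0" and s: "0 < s" "s \<le> R"
  shows "\<phi> (t * R powr (-\<alpha>)) / (K * R ^ (2*n)) \<le> \<phi> (t * s powr (-\<alpha>)) / s ^ (2*n)"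
proof -
  define P where "P = \<phi> (t * s powr (-\<alpha>))"
  have P0: "P \<ge> 0" unfolding P_def using t s by (intro yf_nonneg[OF yf]) auto
  have R: "R > 0" using s by simp
  have T1: "R / s \<ge> 1" using s by simp
  have eq: "(R/s) powr (-\<alpha>) * (t * s powr (-\<alpha>)) = t * R powr (-\<alpha>)"
    using s R by (simp add: powr_divide)
  have "\<phi> (t * R powr (-\<alpha>)) \<le> K * (R/s) ^ n * P"
    using D T1 t s unfolding P_def eq[symmetric] by auto
  then have "\<phi> (t * R powr (-\<alpha>)) * s ^ n \<le> K * (R/s) ^ n * P * s ^ n"
    using s by (intro mult_right_mono) auto
  also have "K * (R/s) ^ n * P * s ^ n = K * R ^ n * P" using s by (simp add: power_divide)
  finally have 1: "\<phi> (t * R powr (-\<alpha>)) * s ^ n \<le> K * R ^ n * P" .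
  have "\<phi> (t * R powr (-\<alpha>)) * s ^ (2*n) = (\<phi> (t * R powr (-\<alpha>)) * s ^ n) * s ^ n"
    by (simp add: mult_2 power_add)
  also have "\<dots> \<le> (K * R ^ n * P) * s ^ n" using 1 s by (intro mult_right_mono) auto
  also have "\<dots> \<le> (K * R ^ n * P) * R ^ n" using s K P0
    by (intro mult_left_mono power_mono) auto
  also have "\<dots> = P * (K * R ^ (2*n))" by (simp add: mult_2 power_add)
  finally have "\<phi> (t * R powr (-\<alpha>)) * s ^ (2*n) \<le> P * (K * R ^ (2*n))" .
  then show ?thesis unfolding P_def[symmetric] using s K R
    by (simp add: divide_le_eq le_divide_eq mult.commute mult.left_commute)
qed

lemma open_leb: "open (\<Omega>::'a::euclidean_space set) \<Longrightarrow> \<Omega> \<in> sets lebesgue"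
  by simp

lemma sing_null: "{x::'a::euclidean_space} \<in> null_sets lebesgue"
  by simp


theorem lemma1p5:
  fixes \<Omega> :: "'a::euclidean_space set" and \<alpha> :: real and \<phi> :: "real \<Rightarrow> real"
  assumes "DIM('a) \<ge> 2"
    and "is_domain \<Omega>" and "globally_regular \<Omega>"
    and "- real DIM('a) < \<alpha>" and "\<alpha> < 0"
    and "young_function \<phi>"
    and "Lambda_lower DIM('a) \<phi> \<alpha> < \<infinity>" and "Lambda_upper DIM('a) \<phi> \<alpha> < \<infinity>"
  shows "\<exists>C1>0. \<exists>C2>0. \<forall>t>0. \<forall>x\<in>\<Omega>. \<forall>E.
           E \<in> sets lebesgue \<and> E \<subseteq> \<Omega> \<and> 0 < emeasure lebesgue E \<and> emeasure lebesgue E < \<infinity> \<longrightarrow>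
           (\<integral>\<^sup>+ y\<in>\<Omega> - E. ennreal (\<phi> (t * norm (x - y) powr (- \<alpha>)) / norm (x - y) ^ (2 * DIM('a))) \<partial>lebesgue)
           \<ge> ennreal (C1 * (1 / measure lebesgue E) *
                (if emeasure lebesgue \<Omega> = \<infinity> then 1
                 else measure lebesgue (\<Omega> - E) / measure lebesgue \<Omega>) *
                \<phi> (C2 * t * measure lebesgue E powr (\<bar>\<alpha>\<bar> / real DIM('a))))"
proof -
  define n where "n = DIM('a)"
  have n1: "n \<ge> 1" unfolding n_def by simp
  have al: "\<alpha> < 0" and yf: "young_function \<phi>" using assms by auto
  obtain \<theta> where th: "0 < \<theta>" "\<theta> < 1" and reg: "\<And>x r. x \<in> \<Omega> \<Longrightarrow> 0 < r \<Longrightarrow> (bounded \<Omega> \<longrightarrow> r < 2 * diameter \<Omega>) \<Longrightarrow>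
            emeasure lebesgue (ball x r \<inter> \<Omega>) \<ge> ennreal (\<theta> * r ^ n)"
    using assms(3) unfolding globally_regular_def n_def by blast
  obtain K where K: "K > 0" and D: "\<forall>T\<ge>1. \<forall>z>0. \<phi> (T powr (-\<alpha>) * z) \<le> K * T ^ n * \<phi> z"
    using doubling[OF yf al assms(8)[folded n_def]] by blast
  have Om: "\<Omega> \<in> sets lebesgue" using assms(2) unfolding is_domain_def by simp
  define C1 where "C1 = \<theta>^2 / (4 * K)"
  have C1: "C1 > 0" unfolding C1_def using th K by simp
  have main: "(\<integral>\<^sup>+ y\<in>\<Omega> - E. ennreal (\<phi> (t * norm (x - y) powr (- \<alpha>)) / norm (x - y) ^ (2 * n)) \<partial>lebesgue)
           \<ge> ennreal (C1 * (1 / measure lebesgue E) *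
                (if emeasure lebesgue \<Omega> = \<infinity> then 1
                 else measure lebesgue (\<Omega> - E) / measure lebesgue \<Omega>) *
                \<phi> (1 * t * measure lebesgue E powr (\<bar>\<alpha>\<bar> / real n)))"
    if t: "t > 0" and x: "x \<in> \<Omega>" and E: "E \<in> sets lebesgue" "E \<subseteq> \<Omega>" "0 < emeasure lebesgue E" "emeasure lebesgue E < \<infinity>"
    for t x E
  proof -
    define m where "m = measure lebesgue E"
    have Ef: "E \<in> fmeasurable lebesgue" using E by (intro fmeasurableI) auto
    have Em: "emeasure lebesgue E = ennreal m" unfolding m_def using Ef by (simp add: emeasure_eq_measure2)
    have m0: "m > 0" using E(3) Em by simp
    define ratio where "ratio = (if emeasure lebesgue \<Omega> = \<infinity> then 1
                 else measure lebesgue (\<Omega> - E) / measure lebesgue \<Omega>)"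
    have r0: "ratio \<ge> 0" unfolding ratio_def by simp
    have r1: "ratio \<le> 1"
    proof (cases "emeasure lebesgue \<Omega> = \<infinity>")
      case False
      then have "\<Omega> \<in> fmeasurable lebesgue" using Om by (intro fmeasurableI) (auto simp: less_top)
      then have "measure lebesgue (\<Omega> - E) \<le> measure lebesgue \<Omega>"
        using Om E by (intro measure_mono_fmeasurable) auto
      then show ?thesis unfolding ratio_def using False
        by (cases "measure lebesgue \<Omega> = 0") (auto simp: divide_le_eq_1 less_le)
    qed (simp add: ratio_def)
    define R where "R = (2*m/\<theta>) powr (1/n)"
    have R0: "R > 0" unfolding R_def using m0 th by simp
    have Rn: "R ^ n = 2*m/\<theta>" unfolding R_def using m0 th n1
      by (simp add: powr_realpow[symmetric] powr_powr)
    define S0 where "S0 = (\<Omega> - E) \<inter> ball x R"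
    have S0m: "S0 \<in> sets lebesgue" unfolding S0_def using Om E by auto
    have S0f: "S0 \<in> fmeasurable lebesgue" unfolding S0_def
      by (rule bounded_set_imp_lmeasurable) (use S0m S0_def in auto)
    have claim1: "m * ratio \<le> measure lebesgue S0"
    proof (cases "bounded \<Omega> \<and> 2 * diameter \<Omega> \<le> R")
      case False
      then have "ennreal (\<theta> * R ^ n) \<le> emeasure lebesgue (ball x R \<inter> \<Omega>)"
        using reg[OF x R0] by auto
      moreover have Bf: "ball x R \<inter> \<Omega> \<in> fmeasurable lebesgue"
        by (rule bounded_set_imp_lmeasurable) (use Om in auto)
      ultimately have "\<theta> * R ^ n \<le> measure lebesgue (ball x R \<inter> \<Omega>)"
        by (simp add: emeasure_eq_measure2 ennreal_le_iff)
      also have "\<dots> \<le> measure lebesgue (S0 \<union> E)"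
        using Bf S0f Ef by (intro measure_mono_fmeasurable) (auto simp: S0_def)
      also have "\<dots> \<le> measure lebesgue S0 + m" unfolding m_def
        using S0m E by (intro measure_Un_le) auto
      finally have le: "\<theta> * R ^ n \<le> measure lebesgue S0 + m" .
      have "\<theta> * R ^ n = 2 * m" using Rn th by simp
      then have "m \<le> measure lebesgue S0" using le by linarith
      then show ?thesis using r0 r1 m0
        using mult_left_le[OF r1, of m] by linarith
    next
      case True
      have "\<Omega> \<subseteq> ball x R"
      proof
        fix y assume "y \<in> \<Omega>"
        then have "dist x y \<le> diameter \<Omega>" using True x by (intro diameter_bounded_bound) auto
        then show "y \<in> ball x R" using True R0 by simp
      qed
      then have S0e: "S0 = \<Omega> - E" unfolding S0_def by auto
      have Of: "\<Omega> \<in> fmeasurable lebesgue" using True Om by (intro bounded_set_imp_lmeasurable) auto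
      have fin: "emeasure lebesgue \<Omega> \<noteq> \<infinity>" using fmeasurableD2[OF Of] by simp
      have mO: "m \<le> measure lebesgue \<Omega>" unfolding m_def using E Of by (intro measure_mono_fmeasurable) auto
      have "m * ratio = (m / measure lebesgue \<Omega>) * measure lebesgue (\<Omega> - E)"
        unfolding ratio_def using fin by simp
      also have "\<dots> \<le> 1 * measure lebesgue (\<Omega> - E)"
        using mO m0 by (intro mult_right_mono) auto
      finally show ?thesis using S0e by simp
    qed
    define c where "c = \<phi> (t * R powr (-\<alpha>)) / (K * R ^ (2*n))"
    have c0: "c \<ge> 0" unfolding c_def using yf_nonneg[OF yf, of "t * R powr (-\<alpha>)"] t K R0 by simp
    have "(\<integral>\<^sup>+ y. ennreal c * indicator (S0 - {x}) y \<partial>lebesgue) \<le>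
      (\<integral>\<^sup>+ y\<in>\<Omega> - E. ennreal (\<phi> (t * norm (x - y) powr (- \<alpha>)) / norm (x - y) ^ (2 * n)) \<partial>lebesgue)"
    proof (intro nn_integral_mono)
      fix y
      show "ennreal c * indicator (S0 - {x}) y \<le> ennreal (\<phi> (t * norm (x - y) powr (- \<alpha>)) / norm (x - y) ^ (2 * n)) * indicator (\<Omega> - E) y"
      proof (cases "y \<in> S0 - {x}")
        case True
        then have y: "y \<in> \<Omega> - E" "0 < norm (x - y)" "norm (x - y) \<le> R"
          unfolding S0_def by (auto simp: dist_norm)
        have "c \<le> \<phi> (t * norm (x - y) powr (- \<alpha>)) / norm (x - y) ^ (2 * n)"
          unfolding c_def by (rule kernel_bound[OF yf al K D t y(2,3)])
        then show ?thesis using True y by (simp add: ennreal_leI)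
      qed simp
    qed
    moreover have "(\<integral>\<^sup>+ y. ennreal c * indicator (S0 - {x}) y \<partial>lebesgue) = ennreal c * ennreal (measure lebesgue S0)"
    proof -
      have "S0 - {x} \<in> sets lebesgue" using S0m by auto
      then have "(\<integral>\<^sup>+ y. ennreal c * indicator (S0 - {x}) y \<partial>lebesgue) = ennreal c * emeasure lebesgue (S0 - {x})"
        by (rule nn_integral_cmult_indicator)
      also have "emeasure lebesgue (S0 - {x}) = emeasure lebesgue S0"
        using S0m by (intro emeasure_Diff_null_set) auto
      also have "\<dots> = ennreal (measure lebesgue S0)" using S0f by (rule emeasure_eq_measure2)
      finally show ?thesis .
    qed
    moreover have "ennreal (C1 * (1 / m) * ratio * \<phi> (1 * t * m powr (\<bar>\<alpha>\<bar> / real n)))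
        \<le> ennreal c * ennreal (measure lebesgue S0)"
    proof -
      have aa: "\<bar>\<alpha>\<bar> = -\<alpha>" using al by simp
      have Rp: "R powr (-\<alpha>) = (2*m/\<theta>) powr (-\<alpha>/n)" unfolding R_def using m0 th
        by (simp add: powr_powr)
      have "m powr (-\<alpha>/n) \<le> (2*m/\<theta>) powr (-\<alpha>/n)"
        using m0 th al by (intro powr_mono2) (auto simp: field_simps divide_nonpos_nonneg)
      then have ph: "\<phi> (1 * t * m powr (\<bar>\<alpha>\<bar> / real n)) \<le> \<phi> (t * R powr (-\<alpha>))"
        unfolding aa Rp using t by (intro yf_mono[OF yf]) auto
      have R2: "R ^ (2*n) = (2*m/\<theta>)^2" unfolding Rn[symmetric] by (simp add: power_mult[symmetric] mult.commute)
      have ceq: "c * (m * ratio) = C1 * (1/m) * ratio * \<phi> (t * R powr (-\<alpha>))"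
        unfolding c_def C1_def R2 using m0 th K by (simp add: field_simps power2_eq_square)
      have "C1 * (1 / m) * ratio * \<phi> (1 * t * m powr (\<bar>\<alpha>\<bar> / real n)) \<le> c * (m * ratio)"
        unfolding ceq using C1 m0 r0 ph by (intro mult_left_mono) auto
      also have "\<dots> \<le> c * measure lebesgue S0" using claim1 c0 by (intro mult_left_mono) auto
      finally show ?thesis using c0 by (simp add: ennreal_mult[symmetric] ennreal_leI)
    qed
    ultimately show ?thesis unfolding ratio_def m_def by simp
  qed
  show ?thesis
    by (rule exI[of _ C1], use C1 in simp, rule exI[of _ 1]) (use main in \<open>auto simp: n_def\<close>)
qed

end
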